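(* Consider the network with vertices $s_1,s_2,s_3,t$ and directed edges $(s_3,s_1),(s_3,s_2),(s_1,t),(s_2,t)$, messages $X_1^k,X_2^k,X_3^k$ with all $3k$ components i.i.d. uniform on a finite alphabet $\mathcal{A}$, a demand function $f:\mathcal{A}^3\to\mathcal{B}$ applied componentwise, and a source-network code computing $f(X_1^k,X_2^k,X_3^k)$ at $t$ with zero error. Let $\mathbf{b}\in\mathcal{B}^k$ and $\mathbf{a}_3\in A_3(\mathbf{b})$. Define the vector $\mathbf{h}_{\mathbf{b},\mathbf{a}_3}\in\mathbb{R}^{M(\mathbf{a}_3,\mathbf{b})}$ whose first $|\mathcal{V}_{12}(\mathbf{a}_3,\mathbf{b})|$ entries are the numbers $h_{\mathbf{a}_3}(C,D)$, $(C,D)\in\mathcal{V}_{12}(\mathbf{a}_3,\mathbf{b})$, listed in non-increasing order, followed by $M(\mathbf{a}_3,\mathbf{b})-|\mathcal{V}_{12}(\mathbf{a}_3,\mathbf{b})|$ zeros. Then every conditional p.m.f. $\mathbf{p}\in\mathbb{R}_{\ge0}^{M(\mathbf{a}_3,\mathbf{b})}$ on the $M(\mathbf{a}_3,\mathbf{b})$ valid $(\mathbf{z}_1,\mathbf{z}_2)$-labels, given $f(X_1^k,X_2^k,X_3^k)=\mathbf{b}$ and $X_3^k=\mathbf{a}_3$, satisfies $\mathbf{p}\prec\mathbf{h}_{\mathbf{b},\mathbf{a}_3}/|A_{123}(\mathbf{b},\mathbf{a}_3)|$.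
   Context: A source-network code consists of encoders $\phi_{(s_3,s_1)},\phi_{(s_3,s_2)}:\mathcal{A}^k\to\mathcal{Z}^*$, $\phi_{(s_1,t)},\phi_{(s_2,t)}:\mathcal{A}^k\times\mathcal{Z}^*\to\mathcal{Z}^*$ ($\mathcal{Z}^*$ = finite sequences over a finite alphabet $\mathcal{Z}$) and a decoder $\psi_t$; $\mathbf{Z}_u=\phi_{(s_u,t)}(X_u^k,\phi_{(s_3,s_u)}(X_3^k))$, $u=1,2$; zero error means $\Pr\{\psi_t(\mathbf{Z}_1,\mathbf{Z}_2)\ne f(X_1^k,X_2^k,X_3^k)\}=0$. For $a_3\in\mathcal{A}$: $x\equiv^{a_3}y|_1$ iff $f(x,z,a_3)=f(y,z,a_3)$ for all $z\in\mathcal{A}$; $x\equiv^{a_3}y|_2$ iff $f(z,x,a_3)=f(z,y,a_3)$ for all $z$. For vectors, $\mathbf{x}_u\equiv^{\mathbf{a}_3}\mathbf{y}_u|_u$ iff componentwise equivalent under $\equiv^{a_3^{(j)}}|_u$. $A_3(\mathbf{b})=\{\mathbf{a}_3\in\mathcal{A}^k:\exists\mathbf{x}_1,\mathbf{x}_2,\ f(\mathbf{x}_1,\mathbf{x}_2,\mathbf{a}_3)=\mathbf{b}\}$; $A_{123}(\mathbf{b},\mathbf{a}_3)$ is the set of message tuples $(\mathbf{x}_1,\mathbf{x}_2,\mathbf{a}_3)$ with $f(\mathbf{x}_1,\mathbf{x}_2,\mathbf{a}_3)=\mathbf{b}$. $\mathcal{V}_{12}(\mathbf{a}_3,\mathbf{b})$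 is the set of pairs $(C,D)$ where $C$ is a class of $\equiv^{\mathbf{a}_3}|_1$, $D$ a class of $\equiv^{\mathbf{a}_3}|_2$, and there exist $\mathbf{x}_1\in C,\mathbf{x}_2\in D$ with $f(\mathbf{x}_1,\mathbf{x}_2,\mathbf{a}_3)=\mathbf{b}$; for such a pair, $h_{\mathbf{a}_3}(C,D)=|\{(\mathbf{x}_1,\mathbf{x}_2)\in C\times D: f(\mathbf{x}_1,\mathbf{x}_2,\mathbf{a}_3)=\mathbf{b}\}|$ (which equals $|C|\cdot|D|$). $M(\mathbf{a}_3,\mathbf{b})$ is the number of distinct pairs $(\mathbf{Z}_1,\mathbf{Z}_2)$ used by the code on tuples in $A_{123}(\mathbf{b},\mathbf{a}_3)$; for a zero-error code $M(\mathbf{a}_3,\mathbf{b})\ge|\mathcal{V}_{12}(\mathbf{a}_3,\mathbf{b})|$. Majorization: $\mathbf{p}\prec\mathbf{q}$ (same length $l$) iff the sum of the $t$ largest entries of $\mathbf{p}$ is at most that of $\mathbf{q}$ for $t=1,\ldots,l-1$ and the total sums are equal. *)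

theory Defs
  imports Complex_Main "HOL-Library.Multiset"
begin

definition vecs :: "nat \<Rightarrow> 'a list set" where
  "vecs k = {xs. length xs = k}"

definition fvec :: "('a \<Rightarrow> 'a \<Rightarrow> 'a \<Rightarrow> 'b) \<Rightarrow> 'a list \<Rightarrow> 'a list \<Rightarrow> 'a list \<Rightarrow> 'b list" where
  "fvec f x1 x2 x3 = map (\<lambda>j. f (x1 ! j) (x2 ! j) (x3 ! j)) [0..<length x3]"

definition eq1 :: "('a \<Rightarrow> 'a \<Rightarrow> 'a \<Rightarrow> 'b) \<Rightarrow> 'a \<Rightarrow> 'a \<Rightarrow> 'a \<Rightarrow> bool" where
  "eq1 f a3 x y \<longleftrightarrow> (\<forall>z. f x z a3 = f y z a3)"

definition eq2 :: "('a \<Rightarrow> 'a \<Rightarrow> 'a \<Rightarrow> 'b) \<Rightarrow> 'a \<Rightarrow> 'a \<Rightarrow> 'a \<Rightarrow> bool" where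
  "eq2 f a3 x y \<longleftrightarrow> (\<forall>z. f z x a3 = f z y a3)"

definition veq1 :: "('a \<Rightarrow> 'a \<Rightarrow> 'a \<Rightarrow> 'b) \<Rightarrow> 'a list \<Rightarrow> 'a list \<Rightarrow> 'a list \<Rightarrow> bool" where
  "veq1 f a3 x y \<longleftrightarrow> length x = length a3 \<and> length y = length a3 \<and>
     (\<forall>j<length a3. eq1 f (a3 ! j) (x ! j) (y ! j))"

definition veq2 :: "('a \<Rightarrow> 'a \<Rightarrow> 'a \<Rightarrow> 'b) \<Rightarrow> 'a list \<Rightarrow> 'a list \<Rightarrow> 'a list \<Rightarrow> bool" where
  "veq2 f a3 x y \<longleftrightarrow> length x = length a3 \<and> length y = length a3 \<and>
     (\<forall>j<length a3. eq2 f (a3 ! j) (x ! j) (y ! j))"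

definition classes1 :: "('a \<Rightarrow> 'a \<Rightarrow> 'a \<Rightarrow> 'b) \<Rightarrow> 'a list \<Rightarrow> 'a list set set" where
  "classes1 f a3 = (\<lambda>x. {y. veq1 f a3 x y}) ` vecs (length a3)"

definition classes2 :: "('a \<Rightarrow> 'a \<Rightarrow> 'a \<Rightarrow> 'b) \<Rightarrow> 'a list \<Rightarrow> 'a list set set" where
  "classes2 f a3 = (\<lambda>x. {y. veq2 f a3 x y}) ` vecs (length a3)"

definition A3 :: "('a \<Rightarrow> 'a \<Rightarrow> 'a \<Rightarrow> 'b) \<Rightarrow> nat \<Rightarrow> 'b list \<Rightarrow> 'a list set" where
  "A3 f k b = {a3 \<in> vecs k. \<exists>x1\<in>vecs k. \<exists>x2\<in>vecs k. fvec f x1 x2 a3 = b}"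

definition A123 :: "('a \<Rightarrow> 'a \<Rightarrow> 'a \<Rightarrow> 'b) \<Rightarrow> 'b list \<Rightarrow> 'a list \<Rightarrow> ('a list \<times> 'a list \<times> 'a list) set" where
  "A123 f b a3 = {(x1, x2, x3). x1 \<in> vecs (length a3) \<and> x2 \<in> vecs (length a3) \<and> x3 = a3 \<and>
                    fvec f x1 x2 a3 = b}"

definition V12 :: "('a \<Rightarrow> 'a \<Rightarrow> 'a \<Rightarrow> 'b) \<Rightarrow> 'a list \<Rightarrow> 'b list \<Rightarrow> ('a list set \<times> 'a list set) set" where
  "V12 f a3 b = {(C, D). C \<in> classes1 f a3 \<and> D \<in> classes2 f a3 \<and>
                   (\<exists>x1\<in>C. \<exists>x2\<in>D. fvec f x1 x2 a3 = b)}"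

definition hval :: "('a \<Rightarrow> 'a \<Rightarrow> 'a \<Rightarrow> 'b) \<Rightarrow> 'a list \<Rightarrow> 'b list \<Rightarrow> 'a list set \<times> 'a list set \<Rightarrow> nat" where
  "hval f a3 b CD = card {(x1, x2). x1 \<in> fst CD \<and> x2 \<in> snd CD \<and> fvec f x1 x2 a3 = b}"

(* message received at t over edge (s_u, t) *)
definition Zmsg :: "('a list \<Rightarrow> 'z list \<Rightarrow> 'z list) \<Rightarrow> ('a list \<Rightarrow> 'z list) \<Rightarrow> 'a list \<Rightarrow> 'a list \<Rightarrow> 'z list" where
  "Zmsg phi_t phi_s xu x3 = phi_t xu (phi_s x3)"

definition label ::
  "('a list \<Rightarrow> 'z list) \<Rightarrow> ('a list \<Rightarrow> 'z list) \<Rightarrow> ('a list \<Rightarrow> 'z list \<Rightarrow> 'z list) \<Rightarrow>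
   ('a list \<Rightarrow> 'z list \<Rightarrow> 'z list) \<Rightarrow> 'a list \<times> 'a list \<times> 'a list \<Rightarrow> 'z list \<times> 'z list" where
  "label phi31 phi32 phi1t phi2t w =
     (case w of (x1, x2, x3) \<Rightarrow> (Zmsg phi1t phi31 x1 x3, Zmsg phi2t phi32 x2 x3))"

(* zero-error (all message tuples have positive probability under the i.i.d. uniform law) *)
definition zero_error ::
  "nat \<Rightarrow> ('a \<Rightarrow> 'a \<Rightarrow> 'a \<Rightarrow> 'b) \<Rightarrow> ('a list \<Rightarrow> 'z list) \<Rightarrow> ('a list \<Rightarrow> 'z list) \<Rightarrow>
   ('a list \<Rightarrow> 'z list \<Rightarrow> 'z list) \<Rightarrow> ('a list \<Rightarrow> 'z list \<Rightarrow> 'z list) \<Rightarrow>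
   ('z list \<Rightarrow> 'z list \<Rightarrow> 'b list) \<Rightarrow> bool" where
  "zero_error k f phi31 phi32 phi1t phi2t psi \<longleftrightarrow>
     (\<forall>x1\<in>vecs k. \<forall>x2\<in>vecs k. \<forall>x3\<in>vecs k.
        psi (Zmsg phi1t phi31 x1 x3) (Zmsg phi2t phi32 x2 x3) = fvec f x1 x2 x3)"

definition Mnum ::
  "('a \<Rightarrow> 'a \<Rightarrow> 'a \<Rightarrow> 'b) \<Rightarrow> ('a list \<Rightarrow> 'z list) \<Rightarrow> ('a list \<Rightarrow> 'z list) \<Rightarrow>
   ('a list \<Rightarrow> 'z list \<Rightarrow> 'z list) \<Rightarrow> ('a list \<Rightarrow> 'z list \<Rightarrow> 'z list) \<Rightarrow> 'a list \<Rightarrow> 'b list \<Rightarrow> nat" where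
  "Mnum f phi31 phi32 phi1t phi2t a3 b = card (label phi31 phi32 phi1t phi2t ` A123 f b a3)"

definition hvec ::
  "('a \<Rightarrow> 'a \<Rightarrow> 'a \<Rightarrow> 'b) \<Rightarrow> ('a list \<Rightarrow> 'z list) \<Rightarrow> ('a list \<Rightarrow> 'z list) \<Rightarrow>
   ('a list \<Rightarrow> 'z list \<Rightarrow> 'z list) \<Rightarrow> ('a list \<Rightarrow> 'z list \<Rightarrow> 'z list) \<Rightarrow> 'b list \<Rightarrow> 'a list \<Rightarrow> real list" where
  "hvec f phi31 phi32 phi1t phi2t b a3 =
     rev (sorted_list_of_multiset (image_mset (\<lambda>CD. real (hval f a3 b CD)) (mset_set (V12 f a3 b))))
     @ replicate (Mnum f phi31 phi32 phi1t phi2t a3 b - card (V12 f a3 b)) 0"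

definition topsum :: "nat \<Rightarrow> real list \<Rightarrow> real" where
  "topsum t xs = sum_list (take t (rev (sort xs)))"

definition majorized :: "real list \<Rightarrow> real list \<Rightarrow> bool" where
  "majorized p q \<longleftrightarrow> length p = length q \<and>
     (\<forall>t\<in>{1..<length p}. topsum t p \<le> topsum t q) \<and> sum_list p = sum_list q"

end

theory Submission
  imports Defs
begin

lemma msub_h1: "M \<subseteq># add_mset y N \<Longrightarrow> M - {#y#} \<subseteq># N"
proof (rule mset_subset_eqI)
  fix a assume "M \<subseteq># add_mset y N"
  then have "count M a \<le> count (add_mset y N) a" by (rule mset_subset_eq_count)
  then show "count (M - {#y#}) a \<le> count N a" by (simp split: if_splits)
qed

lemma msub_h2: "M \<subseteq># add_mset y N \<Longrightarrow> y \<notin># M \<Longrightarrow> M \<subseteq># N"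
proof (rule mset_subset_eqI)
  fix a assume as: "M \<subseteq># add_mset y N" "y \<notin># M"
  have "count M a \<le> count (add_mset y N) a" using as(1) by (rule mset_subset_eq_count)
  have "count M y = 0" using as(2) by (simp add: not_in_iff)
  show "count M a \<le> count N a"
  proof (cases "a = y")
    case True
    then show ?thesis using \<open>count M y = 0\<close> by simp
  next
    case False
    then show ?thesis using \<open>count M a \<le> count (add_mset y N) a\<close> by simp
  qed
qed

lemma msub_h3: "M \<subseteq># N \<Longrightarrow> M - {#m#} \<subseteq># N"
proof (rule mset_subset_eqI)
  fix a assume "M \<subseteq># N"
  then have "count M a \<le> count N a" by (rule mset_subset_eq_count)
  then show "count (M - {#m#}) a \<le> count N a" by simp
qed

lemma msub_h4: "M \<subseteq># N \<Longrightarrow> M \<subseteq># add_mset y N"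
proof (rule mset_subset_eqI)
  fix a assume "M \<subseteq># N"
  then have "count M a \<le> count N a" by (rule mset_subset_eq_count)
  then show "count M a \<le> count (add_mset y N) a" by simp
qed

lemma topsum_ge:
  fixes ys :: "real list"
  assumes "sorted_wrt (\<ge>) ys" "\<forall>y\<in>set ys. 0 \<le> y" "M \<subseteq># mset ys" "size M \<le> t"
  shows "sum_mset M \<le> sum_list (take t ys)"
  using assms
proof (induction ys arbitrary: t M)
  case Nil
  then have "M = {#}" by simp
  then show ?case by simp
next
  case (Cons y ys)
  have so: "sorted_wrt (\<ge>) ys" and ge: "\<forall>z\<in>set ys. z \<le> y" using Cons.prems(1) by auto
  have nn: "\<forall>z\<in>set ys. 0 \<le> z" and y0: "0 \<le> y" using Cons.prems(2) by auto
  have sub: "M \<subseteq># add_mset y (mset ys)" using Cons.prems(3) by simp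
  show ?case
  proof (cases t)
    case 0
    then have "M = {#}" using Cons.prems(4) by simp
    then show ?thesis using 0 by simp
  next
    case (Suc t')
    show ?thesis
    proof (cases "y \<in># M")
      case True
      have s: "M - {#y#} \<subseteq># mset ys" using sub by (rule msub_h1)
      have sz: "size (M - {#y#}) \<le> t'" using True Cons.prems(4) Suc by (simp add: size_Diff_singleton)
      have "sum_mset (M - {#y#}) \<le> sum_list (take t' ys)" by (rule Cons.IH[OF so nn s sz])
      moreover have "sum_mset M = y + sum_mset (M - {#y#})" using True by (simp add: sum_mset.remove)
      ultimately show ?thesis using Suc by simp
    next
      case False
      have s: "M \<subseteq># mset ys" using sub False by (rule msub_h2)
      show ?thesis
      proof (cases "M = {#}")
        case True
        have "\<forall>z\<in>set (take t (y # ys)). 0 \<le> z"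
          using Cons.prems(2) set_take_subset[of t "y # ys"] by blast
        then have "0 \<le> sum_list (take t (y # ys))" by (simp add: sum_list_nonneg)
        then show ?thesis using True by simp
      next
        case False
        then obtain m where m: "m \<in># M" by blast
        have "m \<in> set ys" using mset_subset_eqD[OF s m] by simp
        then have my: "m \<le> y" using ge by blast
        have s2: "M - {#m#} \<subseteq># mset ys" using s by (rule msub_h3)
        have sz: "size (M - {#m#}) \<le> t'" using m Cons.prems(4) Suc by (simp add: size_Diff_singleton)
        have "sum_mset (M - {#m#}) \<le> sum_list (take t' ys)" by (rule Cons.IH[OF so nn s2 sz])
        moreover have "sum_mset M = m + sum_mset (M - {#m#})" using m by (simp add: sum_mset.remove)
        ultimately show ?thesis using Suc my by simp
      qed
    qed
  qed
qed

lemma topsum_upper: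
  assumes "\<forall>x\<in>set xs. 0 \<le> x" "M \<subseteq># mset xs" "size M \<le> t"
  shows "sum_mset M \<le> topsum t xs"
  unfolding topsum_def
  by (rule topsum_ge) (use assms in \<open>auto simp: sorted_wrt_rev\<close>)

lemma topsum_attained:
  "\<exists>M. M \<subseteq># mset xs \<and> size M \<le> t \<and> topsum t xs = sum_mset M"
proof (intro exI conjI)
  let ?M = "mset (take t (rev (sort xs)))"
  show "?M \<subseteq># mset xs"
  proof -
    let ?z = "rev (sort xs)"
    have "mset ?z = mset (take t ?z) + mset (drop t ?z)"
      by (simp flip: mset_append)
    then have "mset (take t ?z) \<subseteq># mset ?z" by (simp add: mset_subset_eq_add_left)
    then show ?thesis by simp
  qed
  show "size ?M \<le> t" by simp
  show "topsum t xs = sum_mset ?M" by (simp add: topsum_def sum_mset_sum_list)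
qed

lemma sub_image_mset:
  "M \<subseteq># image_mset g A \<Longrightarrow> \<exists>B. B \<subseteq># A \<and> M = image_mset g B"
proof (induction A arbitrary: M)
  case empty
  then show ?case by auto
next
  case (add a A)
  show ?case
  proof (cases "g a \<in># M")
    case True
    have "M - {#g a#} \<subseteq># image_mset g A" using add.prems by (simp add: msub_h1)
    then obtain B where "B \<subseteq># A" "M - {#g a#} = image_mset g B" using add.IH by blast
    then have "add_mset a B \<subseteq># add_mset a A" "M = image_mset g (add_mset a B)"
      using True by (simp, metis insert_DiffM image_mset_add_mset)
    then show ?thesis by blast
  next
    case False
    have "M \<subseteq># image_mset g A" using add.prems False by (simp add: msub_h2)
    then show ?thesis using add.IH
      by (meson msub_h4)
  qed
qed

lemma sub_mset_set:
  assumes "finite L" "B \<subseteq># mset_set L"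
  shows "\<exists>S\<subseteq>L. B = mset_set S"
proof (intro exI conjI)
  show "set_mset B \<subseteq> L" using assms mset_subset_eqD by fastforce
  show "B = mset_set (set_mset B)"
  proof (rule multiset_eqI)
    fix x
    have "count B x \<le> count (mset_set L) x" using assms(2) by (simp add: subseteq_mset_def)
    also have "\<dots> \<le> 1" using assms(1) by (simp add: count_mset_set')
    finally have c: "count B x \<le> 1" .
    show "count B x = count (mset_set (set_mset B)) x"
    proof (cases "x \<in># B")
      case True
      then have p: "0 < count B x" by simp
      have "count B x = 1" using p c by linarith
      then show ?thesis using True by (simp add: count_mset_set')
    next
      case False
      then show ?thesis by (simp add: count_mset_set' not_in_iff)
    qed
  qed
qed

lemma veq1_refl: "length x = length a3 \<Longrightarrow> veq1 f a3 x x"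
  by (simp add: veq1_def eq1_def)
lemma veq1_sym: "veq1 f a3 x y \<Longrightarrow> veq1 f a3 y x"
  by (simp add: veq1_def eq1_def)
lemma veq1_trans: "veq1 f a3 x y \<Longrightarrow> veq1 f a3 y z \<Longrightarrow> veq1 f a3 x z"
  by (simp add: veq1_def eq1_def)
lemma veq2_refl: "length x = length a3 \<Longrightarrow> veq2 f a3 x x"
  by (simp add: veq2_def eq2_def)
lemma veq2_sym: "veq2 f a3 x y \<Longrightarrow> veq2 f a3 y x"
  by (simp add: veq2_def eq2_def)
lemma veq2_trans: "veq2 f a3 x y \<Longrightarrow> veq2 f a3 y z \<Longrightarrow> veq2 f a3 x z"
  by (simp add: veq2_def eq2_def)

lemma veq1_cls: "veq1 f a3 x y \<Longrightarrow> {z. veq1 f a3 x z} = {z. veq1 f a3 y z}"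
  by (auto intro: veq1_trans veq1_sym)
lemma veq2_cls: "veq2 f a3 x y \<Longrightarrow> {z. veq2 f a3 x z} = {z. veq2 f a3 y z}"
  by (auto intro: veq2_trans veq2_sym)

lemma class1_eq: "C \<in> classes1 f a3 \<Longrightarrow> x \<in> C \<Longrightarrow> C = {y. veq1 f a3 x y}"
  unfolding classes1_def using veq1_cls by fastforce
lemma class2_eq: "C \<in> classes2 f a3 \<Longrightarrow> x \<in> C \<Longrightarrow> C = {y. veq2 f a3 x y}"
  unfolding classes2_def using veq2_cls by fastforce
lemma class1_len: "C \<in> classes1 f a3 \<Longrightarrow> x \<in> C \<Longrightarrow> x \<in> vecs (length a3)"
  unfolding classes1_def by (auto simp: veq1_def vecs_def)
lemma class2_len: "C \<in> classes2 f a3 \<Longrightarrow> x \<in> C \<Longrightarrow> x \<in> vecs (length a3)"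
  unfolding classes2_def by (auto simp: veq2_def vecs_def)

lemma fvec_nth: "j < length x3 \<Longrightarrow> fvec f x1 x2 x3 ! j = f (x1 ! j) (x2 ! j) (x3 ! j)"
  by (simp add: fvec_def)

lemma zero_error_veq1:
  fixes f :: "'a \<Rightarrow> 'a \<Rightarrow> 'a \<Rightarrow> 'b"
  assumes ze: "zero_error k f phi31 phi32 phi1t phi2t psi" and len: "length a3 = k"
    and x: "x1 \<in> vecs k" "y1 \<in> vecs k"
    and eq: "Zmsg phi1t phi31 x1 a3 = Zmsg phi1t phi31 y1 a3"
  shows "veq1 f a3 x1 y1"
  unfolding veq1_def eq1_def
proof (intro conjI allI impI)
  show "length x1 = length a3" "length y1 = length a3" using x len by (auto simp: vecs_def)
  fix j and z :: 'a assume j: "j < length a3"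
  let ?x2 = "replicate k z"
  have v: "?x2 \<in> vecs k" "a3 \<in> vecs k" using len by (auto simp: vecs_def)
  have h: "\<forall>x1\<in>vecs k. \<forall>x2\<in>vecs k. \<forall>x3\<in>vecs k.
        psi (Zmsg phi1t phi31 x1 x3) (Zmsg phi2t phi32 x2 x3) = fvec f x1 x2 x3"
    using ze by (simp add: zero_error_def)
  have "psi (Zmsg phi1t phi31 x1 a3) (Zmsg phi2t phi32 ?x2 a3) = fvec f x1 ?x2 a3"
    using h x(1) v by blast
  moreover have "psi (Zmsg phi1t phi31 y1 a3) (Zmsg phi2t phi32 ?x2 a3) = fvec f y1 ?x2 a3"
    using h x(2) v by blast
  ultimately have "fvec f x1 ?x2 a3 = fvec f y1 ?x2 a3" using eq by simp
  then have "fvec f x1 ?x2 a3 ! j = fvec f y1 ?x2 a3 ! j" by simp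
  then show "f (x1 ! j) z (a3 ! j) = f (y1 ! j) z (a3 ! j)" using j len by (simp add: fvec_nth)
qed

lemma zero_error_veq2:
  fixes f :: "'a \<Rightarrow> 'a \<Rightarrow> 'a \<Rightarrow> 'b"
  assumes ze: "zero_error k f phi31 phi32 phi1t phi2t psi" and len: "length a3 = k"
    and x: "x2 \<in> vecs k" "y2 \<in> vecs k"
    and eq: "Zmsg phi2t phi32 x2 a3 = Zmsg phi2t phi32 y2 a3"
  shows "veq2 f a3 x2 y2"
  unfolding veq2_def eq2_def
proof (intro conjI allI impI)
  show "length x2 = length a3" "length y2 = length a3" using x len by (auto simp: vecs_def)
  fix j and z :: 'a assume j: "j < length a3"
  let ?x1 = "replicate k z"
  have v: "?x1 \<in> vecs k" "a3 \<in> vecs k" using len by (auto simp: vecs_def)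
  have h: "\<forall>x1\<in>vecs k. \<forall>x2\<in>vecs k. \<forall>x3\<in>vecs k.
        psi (Zmsg phi1t phi31 x1 x3) (Zmsg phi2t phi32 x2 x3) = fvec f x1 x2 x3"
    using ze by (simp add: zero_error_def)
  have "psi (Zmsg phi1t phi31 ?x1 a3) (Zmsg phi2t phi32 x2 a3) = fvec f ?x1 x2 a3"
    using h x(1) v by blast
  moreover have "psi (Zmsg phi1t phi31 ?x1 a3) (Zmsg phi2t phi32 y2 a3) = fvec f ?x1 y2 a3"
    using h x(2) v by blast
  ultimately have "fvec f ?x1 x2 a3 = fvec f ?x1 y2 a3" using eq by simp
  then have "fvec f ?x1 x2 a3 ! j = fvec f ?x1 y2 a3 ! j" by simp
  then show "f z (x2 ! j) (a3 ! j) = f z (y2 ! j) (a3 ! j)" using j len by (simp add: fvec_nth)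
qed

lemma finite_vecs: "finite (vecs k :: ('a::finite) list set)"
  using finite_lists_length_eq[of "UNIV :: 'a set" k] by (simp add: vecs_def)

theorem lemma6:
  fixes k :: nat
    and f :: "'a::finite \<Rightarrow> 'a \<Rightarrow> 'a \<Rightarrow> 'b"
    and phi31 phi32 :: "'a list \<Rightarrow> 'z::finite list"
    and phi1t phi2t :: "'a list \<Rightarrow> 'z list \<Rightarrow> 'z list"
    and psi :: "'z list \<Rightarrow> 'z list \<Rightarrow> 'b list"
    and b :: "'b list" and a3 :: "'a list"
    and ls :: "('z list \<times> 'z list) list"
  assumes "zero_error k f phi31 phi32 phi1t phi2t psi"
    and "length b = k"
    and "a3 \<in> A3 f k b"
    and "distinct ls"
    and "set ls = label phi31 phi32 phi1t phi2t ` A123 f b a3"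
  shows "majorized
           (map (\<lambda>l. real (card {w \<in> A123 f b a3. label phi31 phi32 phi1t phi2t w = l})
                      / real (card (A123 f b a3))) ls)
           (map (\<lambda>x. x / real (card (A123 f b a3))) (hvec f phi31 phi32 phi1t phi2t b a3))"
proof -
  note ze = assms(1)
  define lab where "lab = label phi31 phi32 phi1t phi2t"
  define A where "A = A123 f b a3"
  define N where "N = card A"
  define L where "L = lab ` A"
  define cnt where "cnt l = card {w \<in> A. lab w = l}" for l
  define c1 where "c1 x = {y. veq1 f a3 x y}" for x
  define c2 where "c2 x = {y. veq2 f a3 x y}" for x
  define blk where "blk w = (c1 (fst w), c2 (fst (snd w)))" for w :: "'a list \<times> 'a list \<times> 'a list"
  define hset where "hset B = {(x1, x2). x1 \<in> fst B \<and> x2 \<in> snd B \<and> fvec f x1 x2 a3 = b}"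
    for B :: "'a list set \<times> 'a list set"
  define V where "V = V12 f a3 b"
  define pr where "pr w = (fst w, fst (snd w))" for w :: "'a list \<times> 'a list \<times> 'a list"
  define F where "F l = blk (SOME w. w \<in> A \<and> lab w = l)" for l
  have len: "length a3 = k" using assms(3) by (simp add: A3_def vecs_def)
  have Amem: "w \<in> A \<longleftrightarrow> (\<exists>x1 x2. w = (x1, x2, a3) \<and> x1 \<in> vecs k \<and> x2 \<in> vecs k \<and> fvec f x1 x2 a3 = b)"
    for w unfolding A_def A123_def using len by auto
  have finA: "finite A"
  proof (rule finite_subset)
    show "A \<subseteq> vecs k \<times> vecs k \<times> {a3}" using Amem by auto
    show "finite (vecs k \<times> vecs k \<times> {a3} :: ('a list \<times> 'a list \<times> 'a list) set)"
      by (intro finite_cartesian_product finite_vecs) simp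
  qed
  have Ane: "A \<noteq> {}"
  proof -
    obtain x1 x2 where "x1 \<in> vecs k" "x2 \<in> vecs k" "fvec f x1 x2 a3 = b"
      using assms(3) by (auto simp: A3_def)
    then have "(x1, x2, a3) \<in> A" using Amem by blast
    then show ?thesis by blast
  qed
  have Npos: "real N > 0" using finA Ane by (simp add: N_def card_gt_0_iff)
  have finL: "finite L" using finA by (simp add: L_def)
  have A3rd: "snd (snd w) = a3" if "w \<in> A" for w using that Amem[of w] by auto
  have inj_pr: "inj_on pr A"
  proof (rule inj_onI)
    fix w w' assume "w \<in> A" "w' \<in> A" "pr w = pr w'"
    then show "w = w'" using A3rd[of w] A3rd[of w'] by (simp add: pr_def prod_eq_iff)
  qed
  have blk_lab: "blk w = blk w'" if tt: "w \<in> A" "w' \<in> A" "lab w = lab w'" for w w'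
  proof -
    obtain x1 x2 where w: "w = (x1, x2, a3)" "x1 \<in> vecs k" "x2 \<in> vecs k"
      using tt(1) Amem[of w] by blast
    obtain y1 y2 where w': "w' = (y1, y2, a3)" "y1 \<in> vecs k" "y2 \<in> vecs k"
      using tt(2) Amem[of w'] by blast
    have "Zmsg phi1t phi31 x1 a3 = Zmsg phi1t phi31 y1 a3"
         "Zmsg phi2t phi32 x2 a3 = Zmsg phi2t phi32 y2 a3"
      using tt(3) w w' by (auto simp: lab_def label_def)
    then have e: "veq1 f a3 x1 y1" "veq2 f a3 x2 y2"
      using zero_error_veq1[OF ze len] zero_error_veq2[OF ze len] w w' by auto
    have "c1 x1 = c1 y1" unfolding c1_def by (rule veq1_cls[OF e(1)])
    moreover have "c2 x2 = c2 y2" unfolding c2_def by (rule veq2_cls[OF e(2)])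
    ultimately show ?thesis using w w' by (simp add: blk_def)
  qed
  have F_blk: "F (lab w) = blk w" if tt: "w \<in> A" for w
  proof -
    have "\<exists>w'. w' \<in> A \<and> lab w' = lab w" using tt by blast
    then have "(SOME w'. w' \<in> A \<and> lab w' = lab w) \<in> A \<and> lab (SOME w'. w' \<in> A \<and> lab w' = lab w) = lab w"
      by (rule someI_ex)
    then have "blk (SOME w'. w' \<in> A \<and> lab w' = lab w) = blk w" using blk_lab that by blast
    then show ?thesis unfolding F_def .
  qed
  have blkV: "blk w \<in> V" "pr w \<in> hset (blk w)" if tt: "w \<in> A" for w
  proof -
    obtain x1 x2 where w: "w = (x1, x2, a3)" "x1 \<in> vecs k" "x2 \<in> vecs k" "fvec f x1 x2 a3 = b"
      using tt Amem[of w] by blast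
    have l: "length x1 = length a3" "length x2 = length a3" using w len by (auto simp: vecs_def)
    have m: "x1 \<in> c1 x1" "x2 \<in> c2 x2" using l by (auto simp: c1_def c2_def veq1_refl veq2_refl)
    have "c1 x1 \<in> classes1 f a3" "c2 x2 \<in> classes2 f a3"
      using w len by (auto simp: classes1_def classes2_def c1_def c2_def)
    moreover have "\<exists>y1\<in>c1 x1. \<exists>y2\<in>c2 x2. fvec f y1 y2 a3 = b" using m w by blast
    ultimately show "blk w \<in> V" using w by (simp add: V_def V12_def blk_def)
    show "pr w \<in> hset (blk w)" using m w by (auto simp: hset_def blk_def pr_def)
  qed
  have Vcls: "B = (c1 x1, c2 x2)" if tt: "B \<in> V" "(x1, x2) \<in> hset B" for B x1 x2
  proof -
    obtain C D where B: "B = (C, D)" "C \<in> classes1 f a3" "D \<in> classes2 f a3"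
      using tt(1) by (auto simp: V_def V12_def)
    have x: "x1 \<in> C" "x2 \<in> D" using tt(2) B by (auto simp: hset_def)
    have "C = c1 x1" "D = c2 x2"
      unfolding c1_def c2_def by (rule class1_eq[OF B(2) x(1)], rule class2_eq[OF B(3) x(2)])
    then show ?thesis using B by simp
  qed
  have hset_fin: "finite (hset B)" if tt: "B \<in> V" for B
  proof (rule finite_subset)
    obtain C D where B: "B = (C, D)" "C \<in> classes1 f a3" "D \<in> classes2 f a3"
      using tt by (auto simp: V_def V12_def)
    show "hset B \<subseteq> vecs k \<times> vecs k"
      using B class1_len[OF B(2)] class2_len[OF B(3)] len by (auto simp: hset_def)
    show "finite (vecs k \<times> vecs k :: ('a list \<times> 'a list) set)" by (intro finite_cartesian_product finite_vecs)
  qed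
  have hsetA: "hset B \<subseteq> pr ` A" if tt: "B \<in> V" for B
  proof
    fix p assume p: "p \<in> hset B"
    obtain x1 x2 where p': "p = (x1, x2)" by fastforce
    obtain C D where B: "B = (C, D)" "C \<in> classes1 f a3" "D \<in> classes2 f a3"
      using tt by (auto simp: V_def V12_def)
    have "x1 \<in> C" "x2 \<in> D" "fvec f x1 x2 a3 = b" using p p' B by (auto simp: hset_def)
    moreover have "x1 \<in> vecs k" "x2 \<in> vecs k"
      using class1_len[OF B(2)] class2_len[OF B(3)] len calculation by auto
    ultimately have "(x1, x2, a3) \<in> A" using Amem by blast
    then show "p \<in> pr ` A" using p' by (force simp: pr_def)
  qed
  have hval_eq: "hval f a3 b B = card (hset B)" for B by (simp add: hval_def hset_def)
  have V_sub: "V \<subseteq> F ` L"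
  proof
    fix B assume B: "B \<in> V"
    obtain C D where CD: "B = (C, D)" by (cases B)
    have "\<exists>x1\<in>C. \<exists>x2\<in>D. fvec f x1 x2 a3 = b" using B CD by (simp add: V_def V12_def)
    then obtain x1 x2 where x: "x1 \<in> C" "x2 \<in> D" "fvec f x1 x2 a3 = b" by blast
    have hB: "(x1, x2) \<in> hset B" using x CD by (simp add: hset_def)
    have "(x1, x2) \<in> pr ` A" using hsetA[OF B] hB by (rule subsetD)
    then obtain w where wp: "(x1, x2) = pr w" and wA: "w \<in> A" by (rule imageE)
    have w: "w \<in> A" "pr w = (x1, x2)" using wp wA by simp_all
    have "blk w = (c1 x1, c2 x2)" using w by (simp add: pr_def blk_def)
    also have "\<dots> = B" using Vcls[OF B hB] by (rule sym)
    finally have bw: "blk w = B" .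
    have "lab w \<in> L" using w by (simp add: L_def)
    then have "F (lab w) \<in> F ` L" by (rule imageI)
    then show "B \<in> F ` L" using F_blk[OF w(1)] bw by simp
  qed
  have finV: "finite V" by (rule finite_surj[OF finL V_sub])
  have cardV: "card V \<le> card L"
  proof -
    have "card V \<le> card (F ` L)" using V_sub finL by (intro card_mono) auto
    also have "\<dots> \<le> card L" using finL by (rule card_image_le)
    finally show ?thesis .
  qed
  have cnt_sum: "(\<Sum>l\<in>S. cnt l) = card {w \<in> A. lab w \<in> S}" if "S \<subseteq> L" for S
  proof -
    have fS: "finite S" using that finL finite_subset by blast
    have "{w \<in> A. lab w \<in> S} = (\<Union>l\<in>S. {w \<in> A. lab w = l})" by auto
    moreover have "card (\<Union>l\<in>S. {w \<in> A. lab w = l}) = (\<Sum>l\<in>S. card {w \<in> A. lab w = l})"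
      by (rule card_UN_disjoint) (use fS finA in auto)
    ultimately show ?thesis by (simp add: cnt_def)
  qed
  have "{w \<in> A. lab w \<in> L} = A" by (auto simp: L_def)
  then have cntL: "(\<Sum>l\<in>L. cnt l) = N" using cnt_sum[of L] by (simp add: N_def)
  have hsum: "(\<Sum>B\<in>V. hval f a3 b B) = N"
  proof -
    have "pr ` A \<subseteq> (\<Union>B\<in>V. hset B)"
    proof
      fix p assume "p \<in> pr ` A"
      then obtain w where "p = pr w" "w \<in> A" by (rule imageE)
      then show "p \<in> (\<Union>B\<in>V. hset B)" using blkV[OF \<open>w \<in> A\<close>] by (intro UN_I[of "blk w"]) simp_all
    qed
    moreover have "(\<Union>B\<in>V. hset B) \<subseteq> pr ` A" by (intro UN_least hsetA)
    ultimately have "pr ` A = (\<Union>B\<in>V. hset B)" by (rule subset_antisym)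
    moreover have "card (\<Union>B\<in>V. hset B) = (\<Sum>B\<in>V. card (hset B))"
    proof (rule card_UN_disjoint)
      show "finite V" by (rule finV)
      show "\<forall>i\<in>V. finite (hset i)" using hset_fin by blast
      show "\<forall>i\<in>V. \<forall>j\<in>V. i \<noteq> j \<longrightarrow> hset i \<inter> hset j = {}"
      proof (intro ballI impI)
        fix i j assume ij: "i \<in> V" "j \<in> V" "i \<noteq> j"
        show "hset i \<inter> hset j = {}"
        proof (rule ccontr)
          assume "hset i \<inter> hset j \<noteq> {}"
          then obtain x1 x2 where xi: "(x1, x2) \<in> hset i" and xj: "(x1, x2) \<in> hset j" by auto
          have "i = (c1 x1, c2 x2)" by (rule Vcls[OF ij(1) xi])
          moreover have "j = (c1 x1, c2 x2)" by (rule Vcls[OF ij(2) xj])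
          ultimately show False using ij by simp
        qed
      qed
    qed
    moreover have "card (pr ` A) = N" using inj_pr by (simp add: N_def card_image)
    ultimately show ?thesis by (simp add: hval_eq)
  qed
  have key: "(\<Sum>l\<in>S. cnt l) \<le> (\<Sum>B\<in>F ` S. hval f a3 b B)" "F ` S \<subseteq> V" if "S \<subseteq> L" for S
  proof -
    have fS: "finite S" using that finL finite_subset by blast
    show FS: "F ` S \<subseteq> V" using that F_blk blkV by (auto simp: L_def)
    let ?U = "{w \<in> A. lab w \<in> S}"
    have "card ?U = card (pr ` ?U)" using inj_pr by (simp add: card_image inj_on_subset)
    also have "\<dots> \<le> card (\<Union>B\<in>F ` S. hset B)"
    proof (rule card_mono)
      show "finite (\<Union>B\<in>F ` S. hset B)"
        using fS FS hset_fin by (intro finite_UN_I) auto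
      show "pr ` ?U \<subseteq> (\<Union>B\<in>F ` S. hset B)"
      proof
        fix p assume "p \<in> pr ` ?U"
        then obtain w where w: "w \<in> A" "lab w \<in> S" "p = pr w" by auto
        then have "F (lab w) \<in> F ` S" by simp
        then have "blk w \<in> F ` S" using F_blk[OF w(1)] by simp
        then show "p \<in> (\<Union>B\<in>F ` S. hset B)" using blkV(2)[OF w(1)] w(3)
          by (intro UN_I[of "blk w"]) simp_all
      qed
    qed
    also have "\<dots> \<le> (\<Sum>B\<in>F ` S. card (hset B))" using fS by (intro card_UN_le finite_imageI)
    finally show "(\<Sum>l\<in>S. cnt l) \<le> (\<Sum>B\<in>F ` S. hval f a3 b B)"
      using cnt_sum[OF that] by (simp add: hval_eq)
  qed
  define gp where "gp l = real (cnt l) / real N" for l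
  define gh where "gh B = real (hval f a3 b B) / real N" for B
  define p where "p = map gp ls"
  define hs where "hs = map (\<lambda>x. x / real N) (hvec f phi31 phi32 phi1t phi2t b a3)"
  have Mn: "Mnum f phi31 phi32 phi1t phi2t a3 b = card L"
    by (simp add: Mnum_def L_def lab_def A_def)
  have msetp: "mset p = image_mset gp (mset_set L)"
    using assms(4,5) by (simp add: p_def mset_set_set[symmetric] L_def lab_def A_def)
  have mseth: "mset hs = image_mset gh (mset_set V) + replicate_mset (card L - card V) 0"
    by (simp add: hs_def hvec_def Mn image_mset.compositionality gh_def[abs_def] V_def comp_def)
  have lenp: "length p = card L"
    using assms(4,5) distinct_card by (fastforce simp: p_def L_def lab_def A_def)
  have lenh: "length hs = card L"
  proof -
    have "length hs = size (mset hs)" by simp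
    also have "\<dots> = card L" using cardV finV by (simp add: mseth)
    finally show ?thesis .
  qed
  have sump: "sum_list p = 1"
  proof -
    have "sum_list p = sum_mset (mset p)" by (simp add: sum_mset_sum_list)
    also have "\<dots> = (\<Sum>l\<in>L. gp l)" by (simp add: msetp sum_unfold_sum_mset)
    also have "\<dots> = real (\<Sum>l\<in>L. cnt l) / real N" by (simp add: gp_def sum_divide_distrib)
    also have "\<dots> = 1" using cntL Npos by simp
    finally show ?thesis .
  qed
  have sumh: "sum_list hs = 1"
  proof -
    have "sum_list hs = sum_mset (mset hs)" by (simp add: sum_mset_sum_list)
    also have "\<dots> = (\<Sum>B\<in>V. gh B)" by (simp add: mseth sum_unfold_sum_mset)
    also have "\<dots> = real (\<Sum>B\<in>V. hval f a3 b B) / real N" by (simp add: gh_def sum_divide_distrib)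
    also have "\<dots> = 1" using hsum Npos by simp
    finally show ?thesis .
  qed
  have hs_nn: "\<forall>x\<in>set hs. 0 \<le> x"
  proof
    fix x assume "x \<in> set hs"
    then have "x \<in># mset hs" by simp
    then show "0 \<le> x" using Npos by (auto simp: mseth gh_def split: if_splits)
  qed
  have top: "topsum t p \<le> topsum t hs" for t
  proof -
    obtain M where M: "M \<subseteq># mset p" "size M \<le> t" "topsum t p = sum_mset M"
      using topsum_attained by blast
    obtain B where B: "B \<subseteq># mset_set L" "M = image_mset gp B"
      using sub_image_mset[of M gp "mset_set L"] M(1) msetp by auto
    obtain S where S: "S \<subseteq> L" "B = mset_set S" using sub_mset_set[OF finL B(1)] by blast
    have fS: "finite S" using S finL finite_subset by blast
    have cS: "card S \<le> t" using M(2) B S by simp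
    have "topsum t p = (\<Sum>l\<in>S. gp l)" using M B S by (simp add: sum_unfold_sum_mset)
    also have "\<dots> = real (\<Sum>l\<in>S. cnt l) / real N" by (simp add: gp_def sum_divide_distrib)
    also have "\<dots> \<le> real (\<Sum>B\<in>F ` S. hval f a3 b B) / real N"
      by (intro divide_right_mono of_nat_mono key(1)[OF S(1)]) (use Npos in simp)
    also have "\<dots> = (\<Sum>B\<in>F ` S. gh B)"
      by (simp add: gh_def sum_divide_distrib)
    also have "\<dots> = sum_mset (image_mset gh (mset_set (F ` S)))"
      by (rule sum_unfold_sum_mset)
    also have "\<dots> \<le> topsum t hs"
    proof (rule topsum_upper[OF hs_nn])
      have "image_mset gh (mset_set (F ` S)) \<subseteq># image_mset gh (mset_set V)"
        using key(2)[OF S(1)] finV by (simp add: image_mset_subseteq_mono subset_imp_msubset_mset_set)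
      then show "image_mset gh (mset_set (F ` S)) \<subseteq># mset hs"
        by (simp add: mseth subset_mset.add_increasing2)
      have "card (F ` S) \<le> card S" using fS by (rule card_image_le)
      then show "size (image_mset gh (mset_set (F ` S))) \<le> t" using cS by simp
    qed
    finally show ?thesis .
  qed
  have "majorized p hs"
    unfolding majorized_def using lenp lenh sump sumh top by simp
  then show ?thesis by (simp add: p_def hs_def gp_def[abs_def] cnt_def A_def N_def lab_def)
qed

end
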